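(* Let $n>k\geq 1$, $r=n-k$, and for $i\in[m]$ let $1\leq h_i\leq n-k$ and $k\leq d_i\leq n-h_i$ be integers with $h_i\mid (d_i-k)$. Put $s_i=\frac{d_i-k+h_i}{h_i}$, where the pairs are indexed so that $s_1\leq s_2\leq\cdots\leq s_m$; let $s=\mathrm{lcm}(s_1,\ldots,s_{m-1})$ (with $s=1$ if $m=1$) and $\ell=s\cdot s_m^n$. Let $F$ be a finite field with $|F|\geq s_m n$ and let $\lambda_{i,j}$, $i\in[n]$, $j\in[0,s_m-1]$, be $s_m n$ distinct elements of $F$. Let $\mathcal{C}_2$ be the set of all $(\bm c_1,\ldots,\bm c_n)$ with $\bm c_i=(c_{i,0},\ldots,c_{i,\ell-1})\in F^\ell$ satisfying $$\sum_{i=1}^n \lambda_{i,a_i}^{t-1} c_{i,(a,b)}=0\quad\text{for all } a\in[0,s_m^n-1],\ b\in[0,s-1],\ t\in[r].$$ Then $\mathcal{C}_2$ is an $(n,k,\ell)$ MDS array code satisfying the $(h_i,d_i)$-optimal repair property for every $i\in[m]$ simultaneously.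
   Context: Notation: $[n]=\{1,\ldots,n\}$, $[i,j]=\{i,\ldots,j\}$. Each $\tau\in[0,\ell-1]$ is written uniquely as $\tau=b\cdot s_m^n+\sum_{i=1}^n a_i s_m^{i-1}$ with $b\in[0,s-1]$, $a_i\in[0,s_m-1]$; we write $a=(a_1,\ldots,a_n)=\sum_i a_i s_m^{i-1}$ and $\tau=(a,b)$, so $c_{i,(a,b)}=c_{i,\tau}$. An $(n,k,\ell)$ MDS array code over $F$ is an $F$-linear set of vectors $(\bm c_1,\ldots,\bm c_n)$, $\bm c_i\in F^\ell$ (node $i$ stores $\bm c_i$), of dimension $k\ell$, such that any $k$ coordinates $\bm c_i$ determine the codeword. For $1\leq h\leq n-k$, $k\leq d\leq n-h$, the $(h,d)$-optimal repair property means: for every $h$-subset $\mathcal{H}\subseteq[n]$ and every $d$-subset $\mathcal{R}\subseteq[n]\setminus\mathcal{H}$, each helper $j\in\mathcal{R}$ can send $\beta=\frac{h\ell}{d-k+h}$ symbols of $F$ computed from $\bm c_j$ such that from these $\frac{dh\ell}{d-k+h}$ symbols in total all $\bm c_i$, $i\in\mathcal{H}$, are determined, for every codeword (equality in the cut-set bound). *)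

theory Defs
  imports Main "HOL.Vector_Spaces" "HOL-Library.Function_Algebras"
begin

text \<open>A codeword is a function c :: nat => nat => 'a; c i tau is symbol tau of node i.
  Only i in {1..n}, tau < ell are meaningful; all other entries are required to be 0,
  so that codewords correspond bijectively to tuples (c_1,...,c_n) in (F^ell)^n.\<close>

definition codeword_space :: "nat \<Rightarrow> nat \<Rightarrow> (nat \<Rightarrow> nat \<Rightarrow> 'a::zero) set" where
  "codeword_space n ell = {c. \<forall>i tau. (i \<notin> {1..n} \<or> ell \<le> tau) \<longrightarrow> c i tau = 0}"

definition cw_scale :: "'a::field \<Rightarrow> (nat \<Rightarrow> nat \<Rightarrow> 'a) \<Rightarrow> (nat \<Rightarrow> nat \<Rightarrow> 'a)" where
  "cw_scale a c = (\<lambda>i tau. a * c i tau)"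

definition is_MDS_array_code ::
  "nat \<Rightarrow> nat \<Rightarrow> nat \<Rightarrow> (nat \<Rightarrow> nat \<Rightarrow> 'a::field) set \<Rightarrow> bool" where
  "is_MDS_array_code n k ell C \<longleftrightarrow>
     C \<subseteq> codeword_space n ell \<and>
     module.subspace cw_scale C \<and>
     vector_space.dim cw_scale C = k * ell \<and>
     (\<forall>K. K \<subseteq> {1..n} \<and> card K = k \<longrightarrow>
        (\<forall>c\<in>C. \<forall>c'\<in>C. (\<forall>i\<in>K. c i = c' i) \<longrightarrow> c = c'))"

text \<open>(h,d)-optimal repair property: for every h-subset H of [n] and d-subset R of
  [n]-H, every helper j in R sends beta = h*ell/(d-k+h) symbols of F computed from c_j
  (via an arbitrary function f j of c_j; only the outputs at indices < beta are sent),
  such that these symbols determine c_i for all i in H, for every codeword.\<close>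
definition optimal_repair ::
  "nat \<Rightarrow> nat \<Rightarrow> nat \<Rightarrow> nat \<Rightarrow> nat \<Rightarrow> (nat \<Rightarrow> nat \<Rightarrow> 'a::field) set \<Rightarrow> bool" where
  "optimal_repair n k ell h d C \<longleftrightarrow>
     (\<forall>H R. H \<subseteq> {1..n} \<and> card H = h \<and> R \<subseteq> {1..n} - H \<and> card R = d \<longrightarrow>
        (\<exists>f :: nat \<Rightarrow> (nat \<Rightarrow> 'a) \<Rightarrow> nat \<Rightarrow> 'a.
           \<forall>c\<in>C. \<forall>c'\<in>C.
             (\<forall>j\<in>R. \<forall>u < h * ell div (d - k + h). f j (c j) u = f j (c' j) u)
             \<longrightarrow> (\<forall>i\<in>H. c i = c' i)))"

definition digit :: "nat \<Rightarrow> nat \<Rightarrow> nat \<Rightarrow> nat" where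
  "digit sm a i = a div sm ^ (i - 1) mod sm"

text \<open>The code C_2: tau = (a,b) = b * sm^n + a.\<close>
definition code2 ::
  "nat \<Rightarrow> nat \<Rightarrow> nat \<Rightarrow> nat \<Rightarrow> (nat \<Rightarrow> nat \<Rightarrow> 'a::field) \<Rightarrow> (nat \<Rightarrow> nat \<Rightarrow> 'a) set" where
  "code2 n r sm s lam =
     {c \<in> codeword_space n (s * sm ^ n).
        \<forall>a < sm ^ n. \<forall>b < s. \<forall>t \<in> {1..r}.
          (\<Sum>i = 1..n. lam i (digit sm a i) ^ (t - 1) * c i (b * sm ^ n + a)) = 0}"

end

theory Submission
  imports Defs "HOL-Library.FuncSet"
begin



lemma vdm:
  fixes g :: "'b \<Rightarrow> 'a::field"
  assumes "finite I" "inj_on g I" "card I \<le> r"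
    "\<And>t. t < r \<Longrightarrow> (\<Sum>p\<in>I. w p * g p ^ t) = 0" "p \<in> I"
  shows "w p = 0"
  using assms
proof (induction I arbitrary: r w p rule: finite_induct)
  case empty thus ?case by simp
next
  case (insert x F)
  define w' where "w' q = w q * (g q - g x)" for q
  have r1: "r \<ge> 1" using insert by auto
  have eq: "(\<Sum>q\<in>F. w' q * g q ^ t) = 0" if "t < r - 1" for t
  proof -
    have "(\<Sum>q\<in>F. w' q * g q ^ t) = (\<Sum>q\<in>insert x F. w' q * g q ^ t)"
      using insert by (simp add: w'_def)
    also have "\<dots> = (\<Sum>q\<in>insert x F. w q * g q ^ Suc t) - g x * (\<Sum>q\<in>insert x F. w q * g q ^ t)"
      by (simp add: w'_def sum_distrib_left sum_subtractf[symmetric] algebra_simps)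
    also have "\<dots> = 0" using insert.prems(3)[of "Suc t"] insert.prems(3)[of t] that by simp
    finally show ?thesis .
  qed
  have F0: "w q = 0" if "q \<in> F" for q
  proof -
    have "w' q = 0"
      using insert.IH[of "r - 1" w' q] insert.prems insert.hyps that eq
      by (auto simp: inj_on_insert)
    moreover have "g q \<noteq> g x" using insert.prems(1) insert.hyps that
      by (auto simp: inj_on_def)
    ultimately show ?thesis by (simp add: w'_def)
  qed
  have "(\<Sum>q\<in>insert x F. w q * g q ^ 0) = 0" using insert.prems(3)[of 0] r1 by simp
  hence "w x = 0" using insert.hyps F0 by simp
  thus ?case using F0 insert.prems by auto
qed



lemma digit_lt: "0 < sm \<Longrightarrow> digit sm a i < sm"
  by (simp add: digit_def)

lemma digits_eq:
  assumes "0 < sm" "a1 < sm ^ n" "a2 < sm ^ n" "\<forall>j\<in>{1..n}. digit sm a1 j = digit sm a2 j"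
  shows "a1 = a2"
  using assms
proof (induction n arbitrary: a1 a2)
  case 0 thus ?case by simp
next
  case (Suc n)
  have m: "a1 mod sm = a2 mod sm" using Suc.prems(4)[rule_format, of 1] by (simp add: digit_def)
  have "\<forall>j\<in>{1..n}. digit sm (a1 div sm) j = digit sm (a2 div sm) j"
  proof
    fix j assume j: "j \<in> {1..n}"
    have "digit sm a1 (Suc j) = digit sm a2 (Suc j)" using Suc.prems(4) j by auto
    moreover have "digit sm a (Suc j) = digit sm (a div sm) j" for a
    proof -
      have "sm ^ j = sm * sm ^ (j - 1)" using j by (cases j) auto
      thus ?thesis unfolding digit_def by (simp add: div_mult2_eq)
    qed
    ultimately show "digit sm (a1 div sm) j = digit sm (a2 div sm) j" by simp
  qed
  moreover have "a1 div sm < sm ^ n" "a2 div sm < sm ^ n" using Suc.prems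
    by (auto simp: less_mult_imp_div_less mult.commute)
  ultimately have "a1 div sm = a2 div sm" using Suc.IH Suc.prems(1) by blast
  thus ?case using m by (metis div_mult_mod_eq)
qed

interpretation cw: vector_space cw_scale
  by unfold_locales (auto simp: cw_scale_def fun_eq_iff algebra_simps)


lemma sum_app: "(sum f A) x = (\<Sum>a\<in>A. f a x)"
  by (induction A rule: infinite_finite_induct) auto

lemma solve_vdm:
  fixes g :: "nat \<Rightarrow> 'a::{field,finite}"
  assumes "finite P" "inj_on g P" "card P = r"
  shows "\<exists>x. \<forall>t<r. (\<Sum>i\<in>P. x i * g i ^ t) = y t"
proof -
  define Psi where "Psi x = restrict (\<lambda>t. \<Sum>i\<in>P. x i * g i ^ t) {0..<r}" for x
  define D where "D = PiE P (\<lambda>_. (UNIV::'a set))"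
  define T where "T = PiE {0..<r} (\<lambda>_. (UNIV::'a set))"
  have inj: "inj_on Psi D"
  proof
    fix x x' assume x: "x \<in> D" and x': "x' \<in> D" and e: "Psi x = Psi x'"
    have "x i = x' i" if "i \<in> P" for i
    proof -
      have "(\<lambda>i. x i - x' i) i = 0"
      proof (rule vdm[OF assms(1,2), of r])
        show "card P \<le> r" using assms by simp
        fix t assume "t < r"
        hence "(\<Sum>i\<in>P. x i * g i ^ t) = (\<Sum>i\<in>P. x' i * g i ^ t)"
          using fun_cong[OF e, of t] by (simp add: Psi_def)
        thus "(\<Sum>p\<in>P. (x p - x' p) * g p ^ t) = 0"
          by (simp add: left_diff_distrib sum_subtractf)
      qed (use that in auto)
      thus ?thesis by simp
    qed
    thus "x = x'" using x x' unfolding D_def by (metis PiE_ext)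
  qed
  have sub: "Psi ` D \<subseteq> T" by (auto simp: Psi_def T_def)
  have cD: "card D = card (UNIV::'a set) ^ r" using assms by (simp add: D_def card_PiE)
  have cT: "card T = card (UNIV::'a set) ^ r" by (simp add: T_def card_PiE)
  have "Psi ` D = T"
    by (rule card_subset_eq) (use sub cD cT card_image[OF inj] in \<open>auto simp: T_def finite_PiE\<close>)
  moreover have "restrict y {0..<r} \<in> T" by (simp add: T_def)
  ultimately obtain x where "Psi x = restrict y {0..<r}" by (metis imageE)
  hence "\<forall>t<r. (\<Sum>i\<in>P. x i * g i ^ t) = y t"
    by (auto simp: Psi_def fun_eq_iff split: if_splits)
  thus ?thesis by blast
qed

lemma modsub: "x < m \<Longrightarrow> (q::nat) < m \<Longrightarrow> (x + m - q) mod m = (if q \<le> x then x - q else x + m - q)"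
proof (cases "q \<le> x")
  case True
  assume "x < m" "q < m"
  hence e: "x + m - q = (x - q) + m" using True by simp
  have f: "(x - q + m) mod m = x - q" using \<open>x < m\<close> by simp
  have "(x + m - q) mod m = x - q" by (simp only: e f)
  thus ?thesis using True by simp
next
  case False
  assume "x < m" "q < m"
  thus ?thesis using False by simp
qed
lemma modsub_eq1: "x < m \<Longrightarrow> y < m \<Longrightarrow> (q::nat) < m \<Longrightarrow> (x + m - q) mod m = (y + m - q) mod m \<Longrightarrow> x = y"
  by (simp add: modsub split: if_splits)
lemma modsub_eq2: "x < m \<Longrightarrow> o1 < m \<Longrightarrow> (o2::nat) < m \<Longrightarrow> (x + m - o1) mod m = (x + m - o2) mod m \<Longrightarrow> o1 = o2"
  by (simp add: modsub split: if_splits)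
lemma block_eq_aux:
  assumes "(p1::nat) div si = p2 div si" "p1 mod sm = p2 mod sm" "0 < si" "si \<le> sm" "p1 < p2"
  shows False
proof -
  have "p1 = si * (p1 div si) + p1 mod si" "p2 = si * (p2 div si) + p2 mod si" by simp_all
  moreover have "p2 mod si < si" using assms(3) by simp
  moreover have "si * (p1 div si) = si * (p2 div si)" using assms(1) by simp
  ultimately have "p2 - p1 < sm" using assms by linarith
  moreover have "sm dvd p2 - p1" using assms(2,5) by (metis mod_eq_dvd_iff_nat less_imp_le)
  moreover have "0 < p2 - p1" using assms(5) by simp
  ultimately show False using nat_dvd_not_less by blast
qed
lemma block_eq:
  assumes "(p1::nat) div si = p2 div si" "p1 mod sm = p2 mod sm" "0 < si" "si \<le> sm"
  shows "p1 = p2"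
  using block_eq_aux[OF assms] block_eq_aux[of p2 si p1 sm] assms by (metis linorder_neqE_nat)
lemma lt_div: "(x::nat) < y \<Longrightarrow> si dvd y \<Longrightarrow> 0 < si \<Longrightarrow> x div si < y div si"
proof -
  assume "x < y" "si dvd y" "0 < si"
  then obtain q where q: "y = si * q" by blast
  hence "x < q * si" using \<open>x < y\<close> by (simp add: mult.commute)
  hence "x div si < q" by (rule less_mult_imp_div_less)
  moreover have "y div si = q" using q \<open>0 < si\<close> by (metis nonzero_mult_div_cancel_left not_less0 neq0_conv)
  ultimately show ?thesis by simp
qed

locale cs =
  fixes n k sm s :: nat and lam :: "nat \<Rightarrow> nat \<Rightarrow> 'a::{field,finite}"
  assumes sm_pos: "0 < sm" and s_pos: "0 < s" and kn: "k < n" and k1: "1 \<le> k"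
    and lam_inj: "inj_on (\<lambda>(i,j). lam i j) ({1..n} \<times> {0..<sm})"
begin

lemma lam_eq: "i \<in> {1..n} \<Longrightarrow> j \<in> {1..n} \<Longrightarrow> u < sm \<Longrightarrow> v < sm \<Longrightarrow> lam i u = lam j v \<Longrightarrow> i = j \<and> u = v"
  using inj_onD[OF lam_inj, of "(i,u)" "(j,v)"] by auto

lemma lam_node_inj: "inj_on (\<lambda>i. lam i (digit sm x i)) A" if "A \<subseteq> {1..n}"
  using lam_eq digit_lt[OF sm_pos] that unfolding inj_on_def by blast

lemma par:
  assumes "c \<in> code2 n (n-k) sm s lam" "\<tau> < s * sm ^ n" "t \<in> {1..n-k}"
  shows "(\<Sum>i = 1..n. lam i (digit sm (\<tau> mod sm ^ n) i) ^ (t - 1) * c i \<tau>) = 0"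
proof -
  have b: "\<tau> div sm ^ n < s" using assms(2) by (simp add: less_mult_imp_div_less)
  have a: "\<tau> mod sm ^ n < sm ^ n" using sm_pos by simp
  have e: "\<tau> div sm ^ n * sm ^ n + \<tau> mod sm ^ n = \<tau>" by (rule div_mult_mod_eq)
  have "\<forall>a<sm ^ n. \<forall>b<s. \<forall>t\<in>{1..n-k}.
          (\<Sum>i = 1..n. lam i (digit sm a i) ^ (t - 1) * c i (b * sm ^ n + a)) = 0"
    using assms(1) unfolding code2_def by blast
  hence "(\<Sum>i = 1..n. lam i (digit sm (\<tau> mod sm ^ n) i) ^ (t - 1) * c i (\<tau> div sm ^ n * sm ^ n + \<tau> mod sm ^ n)) = 0"
    using a b assms(3) by blast
  thus ?thesis by (simp only: e)
qed

lemma par_diff: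
  assumes "c \<in> code2 n (n-k) sm s lam" "c' \<in> code2 n (n-k) sm s lam" "\<tau> < s * sm ^ n" "t \<in> {1..n-k}"
  shows "(\<Sum>i = 1..n. lam i (digit sm (\<tau> mod sm ^ n) i) ^ (t - 1) * (c i \<tau> - c' i \<tau>)) = 0"
  using par[OF assms(1,3,4)] par[OF assms(2,3,4)]
  by (simp add: right_diff_distrib sum_subtractf)

lemma cw_zero: "c \<in> code2 n r sm s lam \<Longrightarrow> (i \<notin> {1..n} \<or> s * sm ^ n \<le> \<tau>) \<Longrightarrow> c i \<tau> = 0"
  unfolding code2_def codeword_space_def by blast

lemma mds_unique:
  assumes c: "c \<in> code2 n (n-k) sm s lam" and c': "c' \<in> code2 n (n-k) sm s lam"
    and K: "K \<subseteq> {1..n}" "card K = k" and eq: "\<forall>i\<in>K. c i = c' i"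
  shows "c = c'"
proof (rule ext, rule ext)
  fix i \<tau>
  show "c i \<tau> = c' i \<tau>"
  proof (cases "i \<notin> {1..n} \<or> s * sm ^ n \<le> \<tau>")
    case True thus ?thesis using cw_zero[OF c] cw_zero[OF c'] by simp
  next
    case False
    show ?thesis
    proof (cases "i \<in> K")
      case True thus ?thesis using eq by simp
    next
      case iK: False
      let ?g = "\<lambda>j. lam j (digit sm (\<tau> mod sm ^ n) j)"
      have "(\<lambda>j. c j \<tau> - c' j \<tau>) i = 0"
      proof (rule vdm[where I="{1..n} - K" and g= ?g and r="n - k" and w="\<lambda>j. c j \<tau> - c' j \<tau>"])
        show "inj_on ?g ({1..n} - K)" by (rule lam_node_inj) auto
        show "card ({1..n} - K) \<le> n - k" using K by (simp add: card_Diff_subset finite_subset)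
        fix t assume t: "t < n - k"
        have "(\<Sum>j\<in>{1..n} - K. (c j \<tau> - c' j \<tau>) * ?g j ^ t)
           = (\<Sum>j=1..n. ?g j ^ (Suc t - 1) * (c j \<tau> - c' j \<tau>))"
          by (rule sum.mono_neutral_cong_left) (use eq in \<open>auto simp: mult.commute\<close>)
        also have "\<dots> = 0" using par_diff[OF c c', of \<tau> "Suc t"] False t by auto
        finally show "(\<Sum>j\<in>{1..n} - K. (c j \<tau> - c' j \<tau>) * ?g j ^ t) = 0" .
      qed (use False iK in auto)
      thus ?thesis by simp
    qed
  qed
qed

lemma subspace_code: "cw.subspace (code2 n r sm s lam)"
  unfolding cw.subspace_def
proof (intro conjI ballI allI)
  show "0 \<in> code2 n r sm s lam" by (simp add: code2_def codeword_space_def)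
  fix x y assume x: "x \<in> code2 n r sm s lam" and y: "y \<in> code2 n r sm s lam"
  show "x + y \<in> code2 n r sm s lam"
    using x y unfolding code2_def codeword_space_def by (simp add: distrib_left sum.distrib)
next
  fix c x assume x: "x \<in> code2 n r sm s lam"
  have e: "(\<Sum>i=1..n. L i * cw_scale c x i \<tau>) = c * (\<Sum>i=1..n. L i * x i \<tau>)" for L \<tau>
    by (simp add: cw_scale_def sum_distrib_left mult.left_commute)
  show "cw_scale c x \<in> code2 n r sm s lam"
    using x unfolding code2_def codeword_space_def mem_Collect_eq e by (auto simp: cw_scale_def)
qed

lemma basis_vec:
  assumes "i0 \<in> {1..k}"
  shows "\<exists>w. (\<forall>i\<in>{1..k}. w i = (if i = i0 then 1 else 0)) \<and>
     (\<forall>t\<in>{1..n-k}. (\<Sum>i=1..n. lam i (digit sm x i) ^ (t - 1) * w i) = 0)"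
proof -
  define g where "g i = lam i (digit sm x i)" for i
  have "\<exists>y. \<forall>t<n-k. (\<Sum>i\<in>{Suc k..n}. y i * g i ^ t) = - (g i0 ^ t)"
    by (rule solve_vdm) (use kn in \<open>auto simp: g_def intro!: lam_node_inj\<close>)
  then obtain y where y: "\<And>t. t < n-k \<Longrightarrow> (\<Sum>i\<in>{Suc k..n}. y i * g i ^ t) = - (g i0 ^ t)" by blast
  define w where "w i = (if i \<le> k then (if i = i0 then 1 else 0) else y i)" for i
  have "(\<Sum>i=1..n. g i ^ (t - 1) * w i) = 0" if t: "t \<in> {1..n-k}" for t
  proof -
    have un: "{1..n} = {1..k} \<union> {Suc k..n}" using kn by auto
    have "(\<Sum>i=1..n. g i ^ (t - 1) * w i) = (\<Sum>i\<in>{1..k}. g i ^ (t - 1) * w i) + (\<Sum>i\<in>{Suc k..n}. g i ^ (t - 1) * w i)"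
      unfolding un by (rule sum.union_disjoint) auto
    also have "(\<Sum>i\<in>{1..k}. g i ^ (t - 1) * w i) = (\<Sum>i\<in>{1..k}. if i = i0 then g i0 ^ (t - 1) else 0)"
      by (rule sum.cong) (auto simp: w_def)
    also have "\<dots> = g i0 ^ (t - 1)" using assms by simp
    also have "(\<Sum>i\<in>{Suc k..n}. g i ^ (t - 1) * w i) = (\<Sum>i\<in>{Suc k..n}. y i * g i ^ (t - 1))"
      by (rule sum.cong) (auto simp: w_def)
    also have "\<dots> = - (g i0 ^ (t - 1))" using y[of "t - 1"] t by auto
    finally show ?thesis by simp
  qed
  thus ?thesis unfolding g_def by (intro exI[of _ w]) (auto simp: w_def)
qed

definition "Wv i0 \<tau>0 = (SOME w. (\<forall>i\<in>{1..k}. w i = (if i = i0 then 1 else 0)) \<and>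
     (\<forall>t\<in>{1..n-k}. (\<Sum>i=1..n. lam i (digit sm (\<tau>0 mod sm ^ n) i) ^ (t - 1) * w i) = 0))"

definition "Ev i0 \<tau>0 = (\<lambda>i \<tau>. if \<tau> = \<tau>0 \<and> i \<in> {1..n} then Wv i0 \<tau>0 i else (0::'a))"

lemma Wv: "i0 \<in> {1..k} \<Longrightarrow> (\<forall>i\<in>{1..k}. Wv i0 \<tau>0 i = (if i = i0 then 1 else 0)) \<and>
     (\<forall>t\<in>{1..n-k}. (\<Sum>i=1..n. lam i (digit sm (\<tau>0 mod sm ^ n) i) ^ (t - 1) * Wv i0 \<tau>0 i) = 0)"
  unfolding Wv_def by (fact someI_ex[OF basis_vec])

lemma Ev_in:
  assumes "i0 \<in> {1..k}" "\<tau>0 < s * sm ^ n"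
  shows "Ev i0 \<tau>0 \<in> code2 n (n-k) sm s lam"
  unfolding code2_def codeword_space_def mem_Collect_eq
proof (intro conjI allI impI ballI)
  fix i \<tau> assume "i \<notin> {1..n} \<or> s * sm ^ n \<le> \<tau>"
  thus "Ev i0 \<tau>0 i \<tau> = 0" using assms by (auto simp: Ev_def)
next
  fix a b t assume a: "a < sm ^ n" and b: "b < s" and t: "t \<in> {1..n-k}"
  show "(\<Sum>i = 1..n. lam i (digit sm a i) ^ (t - 1) * Ev i0 \<tau>0 i (b * sm ^ n + a)) = 0"
  proof (cases "b * sm ^ n + a = \<tau>0")
    case True
    hence "a = \<tau>0 mod sm ^ n" using a by auto
    thus ?thesis using Wv[OF assms(1), of \<tau>0] True t by (simp add: Ev_def)
  next
    case False thus ?thesis by (simp add: Ev_def)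
  qed
qed

lemma Ev_val:
  assumes "i0 \<in> {1..k}" "i \<in> {1..k}"
  shows "Ev i0 \<tau>0 i \<tau> = (if i = i0 \<and> \<tau> = \<tau>0 then 1 else 0)"
  using Wv[OF assms(1), of \<tau>0] assms kn by (auto simp: Ev_def)

lemma dim_code: "cw.dim (code2 n (n-k) sm s lam) = k * (s * sm ^ n)"
proof -
  let ?C = "code2 n (n-k) sm s lam"
  let ?I = "{1..k} \<times> {0..<s * sm ^ n}"
  define B where "B = (\<lambda>(i0,\<tau>0). Ev i0 \<tau>0) ` ?I"
  have inj: "inj_on (\<lambda>(i0,\<tau>0). Ev i0 \<tau>0) ?I"
  proof (rule inj_onI, clarify)
    fix i0 \<tau>0 i1 \<tau>1 assume h: "i0 \<in> {1..k}" "\<tau>0 \<in> {0..<s * sm ^ n}" "i1 \<in> {1..k}" "\<tau>1 \<in> {0..<s * sm ^ n}"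
      "Ev i0 \<tau>0 = Ev i1 \<tau>1"
    have "Ev i0 \<tau>0 i0 \<tau>0 = Ev i1 \<tau>1 i0 \<tau>0" using h(5) by simp
    thus "i0 = i1 \<and> \<tau>0 = \<tau>1" using Ev_val[OF h(1) h(1)] Ev_val[OF h(3) h(1)] by (auto split: if_splits)
  qed
  have cardB: "card B = k * (s * sm ^ n)"
    unfolding B_def card_image[OF inj] by (simp add: card_cartesian_product)
  have BC: "B \<subseteq> ?C" unfolding B_def using Ev_in by auto
  have sub: "cw.subspace ?C" by (rule subspace_code)
  have ind: "cw.independent B"
  proof
    assume "cw.dependent B"
    then obtain t u v where t: "finite t" "t \<subseteq> B" "(\<Sum>v\<in>t. cw_scale (u v) v) = 0" "v \<in> t" "u v \<noteq> 0"
      unfolding cw.dependent_explicit by blast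
    obtain i0 \<tau>0 where v: "i0 \<in> {1..k}" "\<tau>0 < s * sm ^ n" "v = Ev i0 \<tau>0" using t(2,4) unfolding B_def by auto
    have val: "v' i0 \<tau>0 = (if v' = v then 1 else 0)" if vt: "v' \<in> t" for v'
    proof -
      obtain i1 \<tau>1 where v': "i1 \<in> {1..k}" "\<tau>1 < s * sm ^ n" "v' = Ev i1 \<tau>1" using t(2) vt unfolding B_def by auto
      have "(\<lambda>(a,b). Ev a b) (i1,\<tau>1) = (\<lambda>(a,b). Ev a b) (i0,\<tau>0) \<longleftrightarrow> (i1,\<tau>1) = (i0,\<tau>0)"
        by (rule inj_on_eq_iff[OF inj]) (use v v' in auto)
      hence "v' = v \<longleftrightarrow> i1 = i0 \<and> \<tau>1 = \<tau>0" using v v' by simp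
      thus ?thesis using Ev_val[OF v'(1) v(1)] v' by auto
    qed
    have "0 = (\<Sum>v\<in>t. cw_scale (u v) v) i0 \<tau>0" using t(3) by simp
    also have "\<dots> = (\<Sum>v'\<in>t. u v' * v' i0 \<tau>0)" by (simp add: sum_app cw_scale_def)
    also have "\<dots> = (\<Sum>v'\<in>t. if v' = v then u v' else 0)" by (rule sum.cong) (auto simp: val)
    also have "\<dots> = u v" using t(1,4) by simp
    finally show False using t(5) by simp
  qed
  have span: "?C \<subseteq> cw.span B"
  proof
    fix c assume c: "c \<in> ?C"
    define c2 where "c2 = (\<Sum>(i0,\<tau>0)\<in>?I. cw_scale (c i0 \<tau>0) (Ev i0 \<tau>0))"
    have c2s: "c2 \<in> cw.span B" unfolding c2_def
    proof (rule cw.span_sum)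
      fix x assume x: "x \<in> ?I"
      obtain a b where ab: "x = (a,b)" by fastforce
      have "Ev a b \<in> B" using x ab unfolding B_def by force
      hence "cw_scale (c a b) (Ev a b) \<in> cw.span B" by (intro cw.span_scale cw.span_base)
      thus "(case x of (i0,\<tau>0) \<Rightarrow> cw_scale (c i0 \<tau>0) (Ev i0 \<tau>0)) \<in> cw.span B" using ab by simp
    qed
    have c2C: "c2 \<in> ?C" using c2s cw.span_minimal[OF BC sub] by auto
    have "\<forall>i\<in>{1..k}. c i = c2 i"
    proof (intro ballI ext)
      fix i \<tau> assume i: "i \<in> {1..k}"
      have "c2 i \<tau> = (\<Sum>x\<in>?I. (case x of (i0,\<tau>0) \<Rightarrow> c i0 \<tau>0 * Ev i0 \<tau>0 i \<tau>))"
        unfolding c2_def by (simp add: sum_app cw_scale_def case_prod_beta)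
      also have "\<dots> = (\<Sum>x\<in>?I. if x = (i,\<tau>) then c i \<tau> else 0)"
      proof (rule sum.cong[OF refl])
        fix x assume "x \<in> ?I"
        then obtain a b where ab: "x = (a,b)" "a \<in> {1..k}" by auto
        show "(case x of (i0,\<tau>0) \<Rightarrow> c i0 \<tau>0 * Ev i0 \<tau>0 i \<tau>) = (if x = (i,\<tau>) then c i \<tau> else 0)"
          using Ev_val[OF ab(2) i, of b \<tau>] ab(1) by auto
      qed
      also have "\<dots> = c i \<tau>" using i cw_zero[OF c, of i \<tau>] by auto
      finally show "c i \<tau> = c2 i \<tau>" by simp
    qed
    hence "c = c2" using mds_unique[OF c c2C, of "{1..k}"] kn by auto
    thus "c \<in> cw.span B" using c2s by simp
  qed
  show ?thesis by (rule cw.dim_unique[OF BC span ind cardB])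
qed

end




context cs begin

lemma repair:
  assumes hh1: "1 \<le> hh" and hd: "dd + hh \<le> n" and kd: "k \<le> dd"
    and si_eq: "si * hh = dd - k + hh" and si_le: "si \<le> sm" and si_dvd: "si dvd s * sm"
  shows "optimal_repair n k (s * sm ^ n) hh dd (code2 n (n-k) sm s lam)"
  unfolding optimal_repair_def
proof (intro allI impI)
  fix H R assume HR: "H \<subseteq> {1..n} \<and> card H = hh \<and> R \<subseteq> {1..n} - H \<and> card R = dd"
  hence Hn: "H \<subseteq> {1..n}" and cH: "card H = hh" and Rn: "R \<subseteq> {1..n} - H" and cR: "card R = dd" by auto
  have finH: "finite H" using Hn finite_subset by blast
  have finR: "finite R" using Rn finite_subset by blast
  have si_pos: "0 < si" using si_eq hh1 by (cases si) auto
  define N where "N = sm ^ n"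
  define ell where "ell = s * N"
  have N_pos: "0 < N" using sm_pos by (simp add: N_def)
  obtain i0 where i0: "i0 \<in> H" using cH hh1 by fastforce
  have i0n: "i0 \<in> {1..n}" using i0 Hn by auto
  define oo where "oo \<tau> = digit sm (\<tau> mod N) i0" for \<tau>
  define nd where "nd \<tau> j = (if j \<in> H then (digit sm (\<tau> mod N) j + sm - oo \<tau>) mod sm else digit sm (\<tau> mod N) j)" for \<tau> j
  define pp where "pp \<tau> = (\<tau> div N) * sm + oo \<tau>" for \<tau>
  define key where "key \<tau> = (restrict (nd \<tau>) ({1..n} - {i0}), pp \<tau> div si)" for \<tau>
  define KS where "KS = PiE ({1..n} - {i0}) (\<lambda>_. {0..<sm}) \<times> {0..<s * sm div si}"
  have oo_lt: "oo \<tau> < sm" for \<tau> using digit_lt[OF sm_pos] by (simp add: oo_def)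
  obtain w where w: "s * sm = si * w" using si_dvd by blast
  have n1: "n \<ge> 1" using kn by simp
  have ell_eq: "ell div si = sm ^ (n - 1) * w"
  proof -
    have p: "sm ^ n = sm * sm ^ (n - 1)" using n1 by (cases n) auto
    have "ell = (s * sm) * sm ^ (n - 1)" by (simp add: ell_def N_def p mult.assoc)
    also have "\<dots> = si * (sm ^ (n - 1) * w)" by (simp add: w mult_ac)
    finally have "ell = si * (sm ^ (n - 1) * w)" .
    thus ?thesis using si_pos by simp
  qed
  have beta: "hh * ell div (dd - k + hh) = ell div si"
    using hh1 by (simp add: si_eq[symmetric] mult.commute[of si hh])
  have cardKS: "card KS = ell div si"
  proof -
    have "card ({1..n} - {i0}) = n - 1" using i0n by simp
    moreover have "s * sm div si = w" using w si_pos by simp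
    ultimately show ?thesis unfolding KS_def ell_eq
      by (simp add: card_cartesian_product card_PiE)
  qed
  have finKS: "finite KS" unfolding KS_def by (simp add: finite_PiE)
  obtain enc where enc: "enc ` KS \<subseteq> {0..<ell div si}" "inj_on enc KS"
    using card_le_inj[OF finKS, of "{0..<ell div si}"] cardKS by auto
  define f :: "nat \<Rightarrow> (nat \<Rightarrow> 'a) \<Rightarrow> nat \<Rightarrow> 'a" where
    "f j x u = (\<Sum>\<gamma>\<in>{\<gamma>\<in>KS. enc \<gamma> = u}. \<Sum>\<tau>\<in>{\<tau>\<in>{0..<ell}. key \<tau> = \<gamma>}. x \<tau>)" for j x u
  have f_enc: "f j x (enc \<gamma>) = (\<Sum>\<tau>\<in>{\<tau>\<in>{0..<ell}. key \<tau> = \<gamma>}. x \<tau>)" if "\<gamma> \<in> KS" for j x \<gamma>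
  proof -
    have "{\<gamma>'\<in>KS. enc \<gamma>' = enc \<gamma>} = {\<gamma>}" using enc(2) that unfolding inj_on_def by auto
    thus ?thesis by (simp add: f_def)
  qed
  have keyKS: "key \<tau> \<in> KS" if "\<tau> < ell" for \<tau>
  proof -
    have "nd \<tau> j < sm" for j using digit_lt[OF sm_pos] sm_pos by (simp add: nd_def)
    moreover have "pp \<tau> < s * sm"
    proof -
      have "\<tau> div N < s" using that by (simp add: ell_def less_mult_imp_div_less)
      hence "\<tau> div N * sm + sm \<le> s * sm" by (metis add.commute mult_Suc less_eq_Suc_le mult_le_mono1)
      thus ?thesis using oo_lt[of \<tau>] by (simp add: pp_def)
    qed
    hence "pp \<tau> div si < s * sm div si" by (rule lt_div[OF _ si_dvd si_pos])
    ultimately show ?thesis by (auto simp: key_def KS_def)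
  qed
  have nd_eq: "nd \<tau>1 j = nd \<tau>2 j" if "key \<tau>1 = key \<tau>2" "j \<in> {1..n}" "j \<noteq> i0" for \<tau>1 \<tau>2 j
  proof -
    have "restrict (nd \<tau>1) ({1..n} - {i0}) j = restrict (nd \<tau>2) ({1..n} - {i0}) j"
      using that(1) by (simp add: key_def)
    thus ?thesis using that by simp
  qed
  have pp_div: "pp \<tau>1 div si = pp \<tau>2 div si" if "key \<tau>1 = key \<tau>2" for \<tau>1 \<tau>2
    using that by (simp add: key_def)
  have C1: "\<tau>1 = \<tau>2" if "key \<tau>1 = key \<tau>2" "pp \<tau>1 = pp \<tau>2" "\<tau>1 < ell" "\<tau>2 < ell" for \<tau>1 \<tau>2
  proof -
    have "pp \<tau> div sm = \<tau> div N" "pp \<tau> mod sm = oo \<tau>" for \<tau>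
      using oo_lt[of \<tau>] sm_pos by (simp_all add: pp_def)
    hence b: "\<tau>1 div N = \<tau>2 div N" and o: "oo \<tau>1 = oo \<tau>2" using that(2) by metis+
    have "\<forall>j\<in>{1..n}. digit sm (\<tau>1 mod N) j = digit sm (\<tau>2 mod N) j"
    proof
      fix j assume j: "j \<in> {1..n}"
      show "digit sm (\<tau>1 mod N) j = digit sm (\<tau>2 mod N) j"
      proof (cases "j = i0")
        case True thus ?thesis using o by (simp add: oo_def)
      next
        case False
        have e: "nd \<tau>1 j = nd \<tau>2 j" using nd_eq[OF that(1) j False] .
        show ?thesis
        proof (cases "j \<in> H")
          case True
          thus ?thesis using e o digit_lt[OF sm_pos] oo_lt
            by (simp add: nd_def) (metis modsub_eq1)
        next
          case False thus ?thesis using e by (simp add: nd_def)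
        qed
      qed
    qed
    hence "\<tau>1 mod N = \<tau>2 mod N"
      by (intro digits_eq[OF sm_pos]) (use N_pos in \<open>simp_all add: N_def\<close>)
    thus ?thesis using b by (metis div_mult_mod_eq)
  qed
  have C2: "pp \<tau>1 = pp \<tau>2" if "key \<tau>1 = key \<tau>2" "oo \<tau>1 = oo \<tau>2" for \<tau>1 \<tau>2
  proof (rule block_eq[OF pp_div[OF that(1)] _ si_pos si_le])
    show "pp \<tau>1 mod sm = pp \<tau>2 mod sm" using that(2) oo_lt sm_pos by (simp add: pp_def)
  qed
  have C3: "oo \<tau>1 = oo \<tau>2" if "key \<tau>1 = key \<tau>2" "i \<in> H"
     "digit sm (\<tau>1 mod N) i = digit sm (\<tau>2 mod N) i" for \<tau>1 \<tau>2 i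
  proof (cases "i = i0")
    case True thus ?thesis using that(3) by (simp add: oo_def)
  next
    case False
    have "nd \<tau>1 i = nd \<tau>2 i" using nd_eq[OF that(1) _ False] that(2) Hn by auto
    thus ?thesis using that(2,3) digit_lt[OF sm_pos] oo_lt by (simp add: nd_def) (metis modsub_eq2)
  qed
  have Q1: "digit sm (\<tau>1 mod N) j = digit sm (\<tau>2 mod N) j" if "key \<tau>1 = key \<tau>2" "j \<in> {1..n} - H" for \<tau>1 \<tau>2 j
    using nd_eq[OF that(1), of j] that(2) i0 by (auto simp: nd_def)
  have main: "c i = c' i" if c: "c \<in> code2 n (n - k) sm s lam" and c': "c' \<in> code2 n (n - k) sm s lam"
      and agree: "\<forall>j\<in>R. \<forall>u<hh * (s * sm ^ n) div (dd - k + hh). f j (c j) u = f j (c' j) u"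
      and iH: "i \<in> H" for c c' i
  proof -
    define e where "e j \<tau> = c j \<tau> - c' j \<tau>" for j \<tau>
    have S0: "(\<Sum>\<tau>\<in>{\<tau>\<in>{0..<ell}. key \<tau> = \<gamma>}. e j \<tau>) = 0" if "j \<in> R" "\<gamma> \<in> KS" for j \<gamma>
    proof -
      have "enc \<gamma> < hh * (s * sm ^ n) div (dd - k + hh)"
        using enc(1) that(2) beta by (auto simp: ell_def N_def)
      hence "f j (c j) (enc \<gamma>) = f j (c' j) (enc \<gamma>)" using agree that(1) by blast
      thus ?thesis using f_enc[OF that(2)] by (simp add: e_def sum_subtractf)
    qed
    show "c i = c' i"
    proof
      fix \<tau>0
      show "c i \<tau>0 = c' i \<tau>0"
      proof (cases "\<tau>0 < ell")
        case False
        thus ?thesis using cw_zero[OF c, of i \<tau>0] cw_zero[OF c', of i \<tau>0] by (simp add: ell_def N_def)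
      next
        case t0: True
        define G0 where "G0 = {\<tau>\<in>{0..<ell}. key \<tau> = key \<tau>0}"
        have finG0: "finite G0" by (simp add: G0_def)
        have t0G: "\<tau>0 \<in> G0" using t0 by (simp add: G0_def)
        define L where "L j \<tau> = lam j (digit sm (\<tau> mod N) j)" for j \<tau>
        define J where "J = {1..n} - H - R"
        define S where "S j = (\<Sum>\<tau>\<in>G0. e j \<tau>)" for j
        have SR: "S j = 0" if "j \<in> R" for j
          using S0[OF that keyKS[OF t0]] by (simp add: S_def G0_def)
        have finJ: "finite J" by (simp add: J_def)
        define I where "I = (H \<times> G0) <+> J"
        define g where "g = case_sum (\<lambda>(i,\<tau>). L i \<tau>) (\<lambda>j. L j \<tau>0)"
        define ww where "ww = case_sum (\<lambda>(i,\<tau>). e i \<tau>) S"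
        have "ww (Inl (i, \<tau>0)) = 0"
        proof (rule vdm[where I=I and g=g and r="n-k" and w=ww])
          show "finite I" unfolding I_def using finH finG0 finJ by simp
          show "Inl (i, \<tau>0) \<in> I" unfolding I_def using iH t0G by (simp add: Plus_def)
          have G0key: "key \<tau> = key \<tau>0" "\<tau> < ell" if "\<tau> \<in> G0" for \<tau>
            using that by (auto simp: G0_def)
          have cG0: "card G0 \<le> si"
          proof -
            have "inj_on (\<lambda>\<tau>. pp \<tau> mod si) G0"
            proof (rule inj_onI)
              fix \<tau>1 \<tau>2 assume a: "\<tau>1 \<in> G0" "\<tau>2 \<in> G0" "pp \<tau>1 mod si = pp \<tau>2 mod si"
              have kk: "key \<tau>1 = key \<tau>2" using G0key a by simp
              have "pp \<tau>1 = pp \<tau>2" using pp_div[OF kk] a(3) by (metis div_mult_mod_eq)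
              thus "\<tau>1 = \<tau>2" using C1[OF kk] G0key a by blast
            qed
            hence "card G0 \<le> card {0..<si}" by (rule card_inj_on_le) (use si_pos in auto)
            thus ?thesis by simp
          qed
          have HR_disj: "H \<inter> R = {}" using Rn by auto
          have cJ: "card J = n - (hh + dd)"
          proof -
            have "J = {1..n} - (H \<union> R)" by (auto simp: J_def)
            moreover have "card (H \<union> R) = hh + dd" using card_Un_disjoint[OF finH finR HR_disj] cH cR by simp
            moreover have "H \<union> R \<subseteq> {1..n}" using Hn Rn by auto
            ultimately show ?thesis using card_Diff_subset[of "H \<union> R" "{1..n}"] finH finR by simp
          qed
          have "card I = hh * card G0 + card J"
            unfolding I_def using finH finG0 finJ cH by (simp add: card_Plus card_cartesian_product)
          also have "\<dots> \<le> hh * si + (n - (hh + dd))" using cG0 cJ by simp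
          also have "\<dots> = n - k" using si_eq hd kd by (simp add: mult.commute)
          finally show "card I \<le> n - k" .
          have Ln: "L j \<tau> = lam j (digit sm (\<tau> mod N) j)" for j \<tau> by (simp add: L_def)
          have Jsub: "J \<subseteq> {1..n} - H" by (auto simp: J_def)
          show "inj_on g I"
          proof (rule inj_onI)
            fix x y assume x: "x \<in> I" and y: "y \<in> I" and gxy: "g x = g y"
            show "x = y"
            proof (cases x)
              case (Inl a)
              then obtain i1 \<tau>1 where xa: "x = Inl (i1,\<tau>1)" "i1 \<in> H" "\<tau>1 \<in> G0" using x by (auto simp: I_def)
              show ?thesis
              proof (cases y)
                case (Inl b)
                then obtain i2 \<tau>2 where yb: "y = Inl (i2,\<tau>2)" "i2 \<in> H" "\<tau>2 \<in> G0" using y by (auto simp: I_def)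
                have "lam i1 (digit sm (\<tau>1 mod N) i1) = lam i2 (digit sm (\<tau>2 mod N) i2)"
                  using gxy xa yb by (simp add: g_def L_def)
                hence ii: "i1 = i2" and dd': "digit sm (\<tau>1 mod N) i1 = digit sm (\<tau>2 mod N) i2"
                  using lam_eq[of i1 i2] xa yb Hn digit_lt[OF sm_pos] by blast+
                have kk: "key \<tau>1 = key \<tau>2" using G0key xa yb by simp
                have "oo \<tau>1 = oo \<tau>2" using C3[OF kk xa(2)] dd' ii by simp
                hence "pp \<tau>1 = pp \<tau>2" using C2[OF kk] by simp
                hence "\<tau>1 = \<tau>2" using C1[OF kk] G0key xa yb by blast
                thus ?thesis using xa yb ii by simp
              next
                case (Inr j)
                hence yj: "j \<in> J" using y by (auto simp: I_def)
                have "lam i1 (digit sm (\<tau>1 mod N) i1) = lam j (digit sm (\<tau>0 mod N) j)"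
                  using gxy xa Inr by (simp add: g_def L_def)
                hence "i1 = j" using lam_eq[of i1 j] xa yj Hn Jsub digit_lt[OF sm_pos] by blast
                thus ?thesis using xa yj Jsub by auto
              qed
            next
              case (Inr j1)
              hence xj: "j1 \<in> J" using x by (auto simp: I_def)
              show ?thesis
              proof (cases y)
                case (Inl b)
                then obtain i2 \<tau>2 where yb: "y = Inl (i2,\<tau>2)" "i2 \<in> H" "\<tau>2 \<in> G0" using y by (auto simp: I_def)
                have "lam j1 (digit sm (\<tau>0 mod N) j1) = lam i2 (digit sm (\<tau>2 mod N) i2)"
                  using gxy yb Inr by (simp add: g_def L_def)
                hence "j1 = i2" using lam_eq[of j1 i2] yb xj Hn Jsub digit_lt[OF sm_pos] by blast
                thus ?thesis using yb xj Jsub by auto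
              next
                case (Inr j2)
                hence yj: "j2 \<in> J" using y by (auto simp: I_def)
                have "lam j1 (digit sm (\<tau>0 mod N) j1) = lam j2 (digit sm (\<tau>0 mod N) j2)"
                  using gxy \<open>x = Inr j1\<close> Inr by (simp add: g_def L_def)
                hence "j1 = j2" using lam_eq[of j1 j2] xj yj Jsub digit_lt[OF sm_pos] by blast
                thus ?thesis using \<open>x = Inr j1\<close> Inr by simp
              qed
            qed
          qed
          fix t assume t: "t < n - k"
          have P0: "(\<Sum>j=1..n. L j \<tau> ^ t * e j \<tau>) = 0" if "\<tau> \<in> G0" for \<tau>
            using par_diff[OF c c', of \<tau> "Suc t"] G0key[OF that] t
            by (simp add: L_def e_def N_def ell_def)
          have un: "{1..n} = H \<union> (R \<union> J)" using Hn Rn by (auto simp: J_def)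
          have d1: "H \<inter> (R \<union> J) = {}" using Rn by (auto simp: J_def)
          have d2: "R \<inter> J = {}" by (auto simp: J_def)
          have split: "(\<Sum>j=1..n. F j) = (\<Sum>j\<in>H. F j) + (\<Sum>j\<in>R. F j) + (\<Sum>j\<in>J. F j)" for F :: "nat \<Rightarrow> 'a"
            unfolding un using finH finR finJ d1 d2
            by (simp add: sum.union_disjoint add.assoc)
          have Q1': "L j \<tau> = L j \<tau>0" if "\<tau> \<in> G0" "j \<in> {1..n} - H" for j \<tau>
            using Q1[of \<tau> \<tau>0 j] G0key[OF that(1)] that(2) by (simp add: L_def)
          have sH: "(\<Sum>\<tau>\<in>G0. \<Sum>j\<in>H. L j \<tau> ^ t * e j \<tau>) = (\<Sum>x\<in>H \<times> G0. e (fst x) (snd x) * L (fst x) (snd x) ^ t)"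
            by (subst sum.swap) (simp add: sum.cartesian_product mult.commute case_prod_beta)
          have sR: "(\<Sum>\<tau>\<in>G0. \<Sum>j\<in>R. L j \<tau> ^ t * e j \<tau>) = 0"
          proof -
            have "(\<Sum>\<tau>\<in>G0. \<Sum>j\<in>R. L j \<tau> ^ t * e j \<tau>) = (\<Sum>j\<in>R. \<Sum>\<tau>\<in>G0. L j \<tau>0 ^ t * e j \<tau>)"
              by (subst sum.swap) (rule sum.cong[OF refl], rule sum.cong[OF refl], use Q1' Rn in auto)
            also have "\<dots> = (\<Sum>j\<in>R. L j \<tau>0 ^ t * S j)" by (simp add: S_def sum_distrib_left)
            also have "\<dots> = 0" using SR by simp
            finally show ?thesis .
          qed
          have sJ: "(\<Sum>\<tau>\<in>G0. \<Sum>j\<in>J. L j \<tau> ^ t * e j \<tau>) = (\<Sum>j\<in>J. S j * L j \<tau>0 ^ t)"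
          proof -
            have "(\<Sum>\<tau>\<in>G0. \<Sum>j\<in>J. L j \<tau> ^ t * e j \<tau>) = (\<Sum>j\<in>J. \<Sum>\<tau>\<in>G0. L j \<tau>0 ^ t * e j \<tau>)"
              by (subst sum.swap) (rule sum.cong[OF refl], rule sum.cong[OF refl], use Q1' Jsub in auto)
            also have "\<dots> = (\<Sum>j\<in>J. S j * L j \<tau>0 ^ t)" by (simp add: S_def sum_distrib_right mult.commute)
            finally show ?thesis .
          qed
          have "0 = (\<Sum>\<tau>\<in>G0. \<Sum>j=1..n. L j \<tau> ^ t * e j \<tau>)" using P0 by simp
          also have "\<dots> = (\<Sum>\<tau>\<in>G0. (\<Sum>j\<in>H. L j \<tau> ^ t * e j \<tau>) + (\<Sum>j\<in>R. L j \<tau> ^ t * e j \<tau>) + (\<Sum>j\<in>J. L j \<tau> ^ t * e j \<tau>))"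
            by (simp only: split)
          also have "\<dots> = (\<Sum>x\<in>H \<times> G0. e (fst x) (snd x) * L (fst x) (snd x) ^ t) + (\<Sum>j\<in>J. S j * L j \<tau>0 ^ t)"
            by (simp only: sum.distrib sH sR sJ) simp
          also have "\<dots> = (\<Sum>p\<in>I. ww p * g p ^ t)"
            unfolding I_def using finH finG0 finJ
            by (simp add: sum.Plus ww_def g_def case_prod_beta comp_def)
          finally show "(\<Sum>p\<in>I. ww p * g p ^ t) = 0" by simp
        qed
        thus ?thesis by (simp add: ww_def e_def)
      qed
    qed
  qed
  show "\<exists>f::nat \<Rightarrow> (nat \<Rightarrow> 'a) \<Rightarrow> nat \<Rightarrow> 'a. \<forall>c\<in>code2 n (n - k) sm s lam. \<forall>c'\<in>code2 n (n - k) sm s lam.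
            (\<forall>j\<in>R. \<forall>u<hh * (s * sm ^ n) div (dd - k + hh). f j (c j) u = f j (c' j) u) \<longrightarrow>
            (\<forall>i\<in>H. c i = c' i)"
    using main by blast
qed

end




theorem theorem2:
  fixes n k m :: nat
    and h d :: "nat \<Rightarrow> nat"
    and lam :: "nat \<Rightarrow> nat \<Rightarrow> 'a::{field,finite}"
  assumes "1 \<le> k" and "k < n" and "1 \<le> m"
    and "\<forall>i\<in>{1..m}. 1 \<le> h i \<and> h i \<le> n - k"
    and "\<forall>i\<in>{1..m}. k \<le> d i \<and> d i \<le> n - h i"
    and "\<forall>i\<in>{1..m}. h i dvd (d i - k)"
    and "\<forall>i\<in>{1..m}. \<forall>j\<in>{1..m}. i \<le> j \<longrightarrow>
           (d i - k + h i) div h i \<le> (d j - k + h j) div h j"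
    and "card (UNIV :: 'a set) \<ge> ((d m - k + h m) div h m) * n"
    and "inj_on (\<lambda>(i, j). lam i j) ({1..n} \<times> {0..<(d m - k + h m) div h m})"
  shows "let sv = (\<lambda>i. (d i - k + h i) div h i);
             s = Lcm (sv ` {1..<m});
             ell = s * sv m ^ n;
             C = code2 n (n - k) (sv m) s lam
         in is_MDS_array_code n k ell C \<and>
            (\<forall>i\<in>{1..m}. optimal_repair n k ell (h i) (d i) C)"
proof -
  define sv where "sv = (\<lambda>i. (d i - k + h i) div h i)"
  define s where "s = Lcm (sv ` {1..<m})"
  have svpos: "0 < sv i" if "i \<in> {1..m}" for i
  proof -
    have "1 \<le> h i" using assms(4) that by blast
    moreover have "h i \<le> d i - k + h i" by simp
    ultimately show ?thesis by (simp add: sv_def div_greater_zero_iff)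
  qed
  have sm_pos: "0 < sv m" using svpos assms(3) by simp
  have s_pos: "0 < s"
  proof -
    have "0 \<notin> sv ` {1..<m}" using svpos by fastforce
    hence "Lcm (sv ` {1..<m}) \<noteq> 0" using Lcm_0_iff[OF finite_imageI[OF finite_atLeastLessThan], of sv 1 m] by blast
    thus ?thesis unfolding s_def by (simp only: neq0_conv)
  qed
  have inj: "inj_on (\<lambda>(i, j). lam i j) ({1..n} \<times> {0..<sv m})" using assms(9) by (simp add: sv_def)
  interpret cs n k "sv m" s lam
    by unfold_locales (use sm_pos s_pos assms(1,2) inj in auto)
  let ?C = "code2 n (n - k) (sv m) s lam"
  let ?ell = "s * sv m ^ n"
  have mds: "is_MDS_array_code n k ?ell ?C"
    unfolding is_MDS_array_code_def
  proof (intro conjI allI impI ballI)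
    show "?C \<subseteq> codeword_space n ?ell" by (auto simp: code2_def)
    show "cw.subspace ?C" by (rule subspace_code)
    show "cw.dim ?C = k * ?ell" by (rule dim_code)
    fix K c c' assume K: "K \<subseteq> {1..n} \<and> card K = k" and c: "c \<in> ?C" and c': "c' \<in> ?C"
      and eq: "\<forall>i\<in>K. c i = c' i"
    show "c = c'" using mds_unique[OF c c' _ _ eq] K by blast
  qed
  have rep: "optimal_repair n k ?ell (h i) (d i) ?C" if i: "i \<in> {1..m}" for i
  proof (rule repair)
    show "1 \<le> h i" using assms(4) i by blast
    show "d i + h i \<le> n" using assms(4,5) i assms(2) by fastforce
    show "k \<le> d i" using assms(5) i by blast
    have "h i dvd (d i - k + h i)" using assms(6) i by simp
    thus "sv i * h i = d i - k + h i" unfolding sv_def by (metis dvd_div_mult_self)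
    show "sv i \<le> sv m" using assms(7) i assms(3) by (simp add: sv_def)
    show "sv i dvd s * sv m"
    proof (cases "i = m")
      case True thus ?thesis by simp
    next
      case False
      hence "i \<in> {1..<m}" using i by auto
      hence "sv i dvd s" unfolding s_def by (simp add: dvd_Lcm)
      thus ?thesis by simp
    qed
  qed
  show ?thesis
    unfolding Let_def using mds rep by (simp add: sv_def s_def)
qed


end
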